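(* Let $H$ be a bialgebra that is projective as a $k$-module, $A$ a left $H$-comodule algebra, and consider the Doi-Hopf datum $(H,A,H)$ ($H$ acting on itself by right multiplication). If $\gamma:H\to\mathrm{Hom}(H,A)$ is an $A$-integral, then $\varphi_\gamma:H\to A$, $\varphi_\gamma(h)=\gamma(h)(1_H)$, is left $H$-colinear; if moreover $\gamma$ is total, then $\varphi_\gamma(1_H)=1_A$, i.e. $\varphi_\gamma$ is a total integral in the sense of Doi.
   Context: $k$ commutative ring; Sweedler notation $\Delta(h)=\sum h_{(1)}\otimes h_{(2)}$, $\rho_A(a)=\sum a_{<-1>}\otimes a_{<0>}$ (iterated $a_{<-2>}\otimes a_{<-1>}\otimes a_{<0>}$). A left $H$-comodule algebra is an algebra $A$ with a left $H$-coaction that is an algebra map. For the Doi-Hopf datum $(H,A,C)$ with $C=H$ and $c\cdot h=ch$, an $A$-integral is a $k$-linear $\gamma:H\to\mathrm{Hom}(H,A)$ with, for all $a\in A$, $c,d\in H$: (i) $\sum a_{<0>}\gamma(ca_{<-2>})(da_{<-1>})=\gamma(c)(d)\,a$; (ii) $\sum c_{(1)}\otimes\gamma(c_{(2)})(d)=\sum d_{(2)}\gamma(c)(d_{(1)})_{<-1>}\otimes\gamma(c)(d_{(1)})_{<0>}$; it is total if $\sum\gamma(c_{(1)})(c_{(2)})=\varepsilon(c)1_A$. A total integral (Doi) is a left $H$-colinear map $\varphi:H\to A$ with $\varphi(1_H)=1_A$. *)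

theory Defs
  imports Complex_Main "HOL-Library.Function_Algebras"
begin

text \<open>An element of a tensor product M (x) N (resp. M (x) N (x) P) over the commutative
ring 'k is represented by a finite list of simple tensors (Sweedler-style sums).
Two lists represent the same element iff the difference of the associated
elements of the free k-module on M x N (resp. M x N x P) lies in the submodule
spanned by the multilinearity relations, i.e. the usual construction of the
tensor product as a quotient of the free module.\<close>

definition fscale :: "'k::comm_ring_1 \<Rightarrow> ('x \<Rightarrow> 'k) \<Rightarrow> ('x \<Rightarrow> 'k)" where
  "fscale r f = (\<lambda>x. r * f x)"

definition fvec :: "'x list \<Rightarrow> ('x \<Rightarrow> 'k::comm_ring_1)" where
  "fvec xs = (\<lambda>p. of_nat (count_list xs p))"

definition delta :: "'x \<Rightarrow> ('x \<Rightarrow> 'k::comm_ring_1)" where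
  "delta p = (\<lambda>q. if q = p then 1 else 0)"

definition tens2_rels ::
  "('k::comm_ring_1 \<Rightarrow> 'm::ab_group_add \<Rightarrow> 'm) \<Rightarrow> ('k \<Rightarrow> 'n::ab_group_add \<Rightarrow> 'n)
   \<Rightarrow> ('m \<times> 'n \<Rightarrow> 'k) set" where
  "tens2_rels sM sN =
     {delta (m + m', n) - delta (m, n) - delta (m', n) | m m' n. True}
   \<union> {delta (m, n + n') - delta (m, n) - delta (m, n') | m n n'. True}
   \<union> {delta (sM r m, n) - fscale r (delta (m, n)) | r m n. True}
   \<union> {delta (m, sN r n) - fscale r (delta (m, n)) | r m n. True}"

definition tens2_eq ::
  "('k::comm_ring_1 \<Rightarrow> 'm::ab_group_add \<Rightarrow> 'm) \<Rightarrow> ('k \<Rightarrow> 'n::ab_group_add \<Rightarrow> 'n)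
   \<Rightarrow> ('m \<times> 'n) list \<Rightarrow> ('m \<times> 'n) list \<Rightarrow> bool" where
  "tens2_eq sM sN xs ys \<longleftrightarrow> fvec xs - fvec ys \<in> module.span fscale (tens2_rels sM sN)"

definition tens3_rels ::
  "('k::comm_ring_1 \<Rightarrow> 'm::ab_group_add \<Rightarrow> 'm) \<Rightarrow> ('k \<Rightarrow> 'n::ab_group_add \<Rightarrow> 'n)
   \<Rightarrow> ('k \<Rightarrow> 'p::ab_group_add \<Rightarrow> 'p) \<Rightarrow> ('m \<times> 'n \<times> 'p \<Rightarrow> 'k) set" where
  "tens3_rels sM sN sP =
     {delta (m + m', n, p) - delta (m, n, p) - delta (m', n, p) | m m' n p. True}
   \<union> {delta (m, n + n', p) - delta (m, n, p) - delta (m, n', p) | m n n' p. True}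
   \<union> {delta (m, n, p + p') - delta (m, n, p) - delta (m, n, p') | m n p p'. True}
   \<union> {delta (sM r m, n, p) - fscale r (delta (m, n, p)) | r m n p. True}
   \<union> {delta (m, sN r n, p) - fscale r (delta (m, n, p)) | r m n p. True}
   \<union> {delta (m, n, sP r p) - fscale r (delta (m, n, p)) | r m n p. True}"

definition tens3_eq ::
  "('k::comm_ring_1 \<Rightarrow> 'm::ab_group_add \<Rightarrow> 'm) \<Rightarrow> ('k \<Rightarrow> 'n::ab_group_add \<Rightarrow> 'n)
   \<Rightarrow> ('k \<Rightarrow> 'p::ab_group_add \<Rightarrow> 'p)
   \<Rightarrow> ('m \<times> 'n \<times> 'p) list \<Rightarrow> ('m \<times> 'n \<times> 'p) list \<Rightarrow> bool" where
  "tens3_eq sM sN sP xs ys \<longleftrightarrow> fvec xs - fvec ys \<in> module.span fscale (tens3_rels sM sN sP)"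

text \<open>A k-algebra: a ring (type class ring_1 gives associativity, unit, biadditivity)
which is a k-module such that multiplication is k-bilinear.\<close>

definition k_algebra :: "('k::comm_ring_1 \<Rightarrow> 'a::ring_1 \<Rightarrow> 'a) \<Rightarrow> bool" where
  "k_algebra s \<longleftrightarrow> module s \<and>
     (\<forall>r x y. s r (x * y) = s r x * y \<and> s r (x * y) = x * s r y)"

text \<open>Projective k-module: the canonical surjection from the free module on the
underlying set, k^(M) \<rightarrow> M, splits k-linearly (M is a direct summand of a free module).\<close>

definition projective_module :: "('k::comm_ring_1 \<Rightarrow> 'm::ab_group_add \<Rightarrow> 'm) \<Rightarrow> bool" where
  "projective_module s \<longleftrightarrow> module s \<and>
     (\<exists>f :: 'm \<Rightarrow> 'm \<Rightarrow> 'k. module_hom s fscale f \<and>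
        (\<forall>m. finite {x. f m x \<noteq> 0} \<and> (\<Sum>x\<in>{x. f m x \<noteq> 0}. s (f m x) x) = m))"

text \<open>Bialgebra (H, mult, 1, Delta, eps) over k; Delta h is a list representing
sum h_(1) (x) h_(2).\<close>

definition bialgebra ::
  "('k::comm_ring_1 \<Rightarrow> 'h::ring_1 \<Rightarrow> 'h) \<Rightarrow> ('h \<Rightarrow> ('h \<times> 'h) list) \<Rightarrow> ('h \<Rightarrow> 'k) \<Rightarrow> bool" where
  "bialgebra sH \<Delta> \<epsilon> \<longleftrightarrow> k_algebra sH \<and>
     \<comment> \<open>Delta is k-linear\<close>
     (\<forall>x y. tens2_eq sH sH (\<Delta> (x + y)) (\<Delta> x @ \<Delta> y)) \<and>
     (\<forall>r x. tens2_eq sH sH (\<Delta> (sH r x)) (map (\<lambda>(a, b). (sH r a, b)) (\<Delta> x))) \<and>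
     \<comment> \<open>coassociativity\<close>
     (\<forall>x. tens3_eq sH sH sH
        (concat (map (\<lambda>(a, b). map (\<lambda>(b1, b2). (a, b1, b2)) (\<Delta> b)) (\<Delta> x)))
        (concat (map (\<lambda>(a, b). map (\<lambda>(a1, a2). (a1, a2, b)) (\<Delta> a)) (\<Delta> x)))) \<and>
     \<comment> \<open>eps is k-linear and a counit\<close>
     module_hom sH (*) \<epsilon> \<and>
     (\<forall>x. (\<Sum>(a, b)\<leftarrow>\<Delta> x. sH (\<epsilon> a) b) = x) \<and>
     (\<forall>x. (\<Sum>(a, b)\<leftarrow>\<Delta> x. sH (\<epsilon> b) a) = x) \<and>
     \<comment> \<open>Delta and eps are algebra maps\<close>
     (\<forall>x y. tens2_eq sH sH (\<Delta> (x * y))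
        (concat (map (\<lambda>(x1, x2). map (\<lambda>(y1, y2). (x1 * y1, x2 * y2)) (\<Delta> y)) (\<Delta> x)))) \<and>
     tens2_eq sH sH (\<Delta> 1) [(1, 1)] \<and>
     (\<forall>x y. \<epsilon> (x * y) = \<epsilon> x * \<epsilon> y) \<and> \<epsilon> 1 = 1"

text \<open>Left H-comodule algebra A with coaction rho a = sum a_<-1> (x) a_<0>.\<close>

definition left_comodule_algebra ::
  "('k::comm_ring_1 \<Rightarrow> 'h::ring_1 \<Rightarrow> 'h) \<Rightarrow> ('h \<Rightarrow> ('h \<times> 'h) list) \<Rightarrow> ('h \<Rightarrow> 'k)
   \<Rightarrow> ('k \<Rightarrow> 'a::ring_1 \<Rightarrow> 'a) \<Rightarrow> ('a \<Rightarrow> ('h \<times> 'a) list) \<Rightarrow> bool" where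
  "left_comodule_algebra sH \<Delta> \<epsilon> sA \<rho> \<longleftrightarrow> k_algebra sA \<and>
     \<comment> \<open>rho is k-linear\<close>
     (\<forall>x y. tens2_eq sH sA (\<rho> (x + y)) (\<rho> x @ \<rho> y)) \<and>
     (\<forall>r x. tens2_eq sH sA (\<rho> (sA r x)) (map (\<lambda>(h, a). (sH r h, a)) (\<rho> x))) \<and>
     \<comment> \<open>coassociativity: (Delta (x) id) rho = (id (x) rho) rho\<close>
     (\<forall>x. tens3_eq sH sH sA
        (concat (map (\<lambda>(h, a). map (\<lambda>(h1, h2). (h1, h2, a)) (\<Delta> h)) (\<rho> x)))
        (concat (map (\<lambda>(h, a). map (\<lambda>(g, b). (h, g, b)) (\<rho> a)) (\<rho> x)))) \<and>
     \<comment> \<open>counit\<close>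
     (\<forall>x. (\<Sum>(h, a)\<leftarrow>\<rho> x. sA (\<epsilon> h) a) = x) \<and>
     \<comment> \<open>rho is an algebra map\<close>
     (\<forall>x y. tens2_eq sH sA (\<rho> (x * y))
        (concat (map (\<lambda>(h, a). map (\<lambda>(g, b). (h * g, a * b)) (\<rho> y)) (\<rho> x)))) \<and>
     tens2_eq sH sA (\<rho> 1) [(1, 1)]"

text \<open>gamma : H \<rightarrow> Hom(H, A), written curried: gamma c d = gamma(c)(d).
k-linearity of gamma into Hom_k(H,A) = k-bilinearity of the curried map.\<close>

definition A_integral ::
  "('k::comm_ring_1 \<Rightarrow> 'h::ring_1 \<Rightarrow> 'h) \<Rightarrow> ('h \<Rightarrow> ('h \<times> 'h) list)
   \<Rightarrow> ('k \<Rightarrow> 'a::ring_1 \<Rightarrow> 'a) \<Rightarrow> ('a \<Rightarrow> ('h \<times> 'a) list) \<Rightarrow> ('h \<Rightarrow> 'h \<Rightarrow> 'a) \<Rightarrow> bool" where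
  "A_integral sH \<Delta> sA \<rho> \<gamma> \<longleftrightarrow>
     (\<forall>c. module_hom sH sA (\<gamma> c)) \<and> (\<forall>d. module_hom sH sA (\<lambda>c. \<gamma> c d)) \<and>
     \<comment> \<open>(i): sum a_<0> gamma(c a_<-2>)(d a_<-1>) = gamma(c)(d) a\<close>
     (\<forall>a c d. (\<Sum>(h, a0)\<leftarrow>\<rho> a. \<Sum>(h1, h2)\<leftarrow>\<Delta> h. a0 * \<gamma> (c * h1) (d * h2)) = \<gamma> c d * a) \<and>
     \<comment> \<open>(ii): sum c_(1) (x) gamma(c_(2))(d) = sum d_(2) gamma(c)(d_(1))_<-1> (x) gamma(c)(d_(1))_<0>\<close>
     (\<forall>c d. tens2_eq sH sA
        (map (\<lambda>(c1, c2). (c1, \<gamma> c2 d)) (\<Delta> c))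
        (concat (map (\<lambda>(d1, d2). map (\<lambda>(h, a). (d2 * h, a)) (\<rho> (\<gamma> c d1))) (\<Delta> d))))"

definition total_A_integral ::
  "('k::comm_ring_1 \<Rightarrow> 'h::ring_1 \<Rightarrow> 'h) \<Rightarrow> ('h \<Rightarrow> ('h \<times> 'h) list) \<Rightarrow> ('h \<Rightarrow> 'k)
   \<Rightarrow> ('k \<Rightarrow> 'a::ring_1 \<Rightarrow> 'a) \<Rightarrow> ('a \<Rightarrow> ('h \<times> 'a) list) \<Rightarrow> ('h \<Rightarrow> 'h \<Rightarrow> 'a) \<Rightarrow> bool" where
  "total_A_integral sH \<Delta> \<epsilon> sA \<rho> \<gamma> \<longleftrightarrow> A_integral sH \<Delta> sA \<rho> \<gamma> \<and>
     (\<forall>c. (\<Sum>(c1, c2)\<leftarrow>\<Delta> c. \<gamma> c1 c2) = sA (\<epsilon> c) 1)"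

definition left_colinear ::
  "('k::comm_ring_1 \<Rightarrow> 'h::ring_1 \<Rightarrow> 'h) \<Rightarrow> ('h \<Rightarrow> ('h \<times> 'h) list)
   \<Rightarrow> ('k \<Rightarrow> 'a::ring_1 \<Rightarrow> 'a) \<Rightarrow> ('a \<Rightarrow> ('h \<times> 'a) list) \<Rightarrow> ('h \<Rightarrow> 'a) \<Rightarrow> bool" where
  "left_colinear sH \<Delta> sA \<rho> \<phi> \<longleftrightarrow> module_hom sH sA \<phi> \<and>
     (\<forall>h. tens2_eq sH sA (\<rho> (\<phi> h)) (map (\<lambda>(h1, h2). (h1, \<phi> h2)) (\<Delta> h)))"

definition doi_total_integral ::
  "('k::comm_ring_1 \<Rightarrow> 'h::ring_1 \<Rightarrow> 'h) \<Rightarrow> ('h \<Rightarrow> ('h \<times> 'h) list)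
   \<Rightarrow> ('k \<Rightarrow> 'a::ring_1 \<Rightarrow> 'a) \<Rightarrow> ('a \<Rightarrow> ('h \<times> 'a) list) \<Rightarrow> ('h \<Rightarrow> 'a) \<Rightarrow> bool" where
  "doi_total_integral sH \<Delta> sA \<rho> \<phi> \<longleftrightarrow> left_colinear sH \<Delta> sA \<rho> \<phi> \<and> \<phi> 1 = 1"

end

theory Submission
  imports Defs
begin

definition fsupp :: "('x \<Rightarrow> 'k::zero) \<Rightarrow> 'x set" where "fsupp v = {p. v p \<noteq> 0}"

definition Lf :: "('k::comm_ring_1 \<Rightarrow> 'v \<Rightarrow> 'v) \<Rightarrow> ('x \<Rightarrow> 'v::ab_group_add) \<Rightarrow> ('x \<Rightarrow> 'k) \<Rightarrow> 'v" where
  "Lf s f v = (\<Sum>p\<in>fsupp v. s (v p) (f p))"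

lemma module_fscale: "module (fscale :: 'k::comm_ring_1 \<Rightarrow> ('x \<Rightarrow> 'k) \<Rightarrow> _)"
  by unfold_locales (auto simp: fscale_def fun_eq_iff algebra_simps)

lemma Lf_eq_sum:
  assumes "module s" "finite S" "fsupp v \<subseteq> S"
  shows "Lf s f v = (\<Sum>p\<in>S. s (v p) (f p))"
  unfolding Lf_def
  by (rule sum.mono_neutral_left) (use assms in \<open>auto simp: fsupp_def module.scale_zero_left\<close>)

lemma fsupp_add: "fsupp (v + w :: _ \<Rightarrow> 'k::comm_ring_1) \<subseteq> fsupp v \<union> fsupp w"
  by (auto simp: fsupp_def)
lemma fsupp_diff: "fsupp (v - w :: _ \<Rightarrow> 'k::comm_ring_1) \<subseteq> fsupp v \<union> fsupp w"
  by (auto simp: fsupp_def)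
lemma fsupp_scale: "fsupp (fscale r v) \<subseteq> fsupp v"
  by (auto simp: fsupp_def fscale_def)
lemma fsupp_delta: "fsupp (delta p :: _ \<Rightarrow> 'k::comm_ring_1) = {p}"
  by (auto simp: fsupp_def delta_def)

lemma Lf_add:
  assumes "module s" "finite (fsupp v)" "finite (fsupp w)"
  shows "Lf s f (v + w) = Lf s f v + Lf s f w"
proof -
  let ?S = "fsupp v \<union> fsupp w"
  have "Lf s f (v + w) = (\<Sum>p\<in>?S. s ((v+w) p) (f p))"
    by (rule Lf_eq_sum) (use assms fsupp_add[of v w] in auto)
  also have "\<dots> = (\<Sum>p\<in>?S. s (v p) (f p)) + (\<Sum>p\<in>?S. s (w p) (f p))"
    by (simp add: module.scale_left_distrib[OF assms(1)] sum.distrib)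
  also have "\<dots> = Lf s f v + Lf s f w"
    using assms Lf_eq_sum[of s ?S v f] Lf_eq_sum[of s ?S w f] by simp
  finally show ?thesis .
qed

lemma Lf_diff:
  assumes "module s" "finite (fsupp v)" "finite (fsupp w)"
  shows "Lf s f (v - w) = Lf s f v - Lf s f w"
proof -
  let ?S = "fsupp v \<union> fsupp w"
  have "Lf s f (v - w) = (\<Sum>p\<in>?S. s ((v-w) p) (f p))"
    by (rule Lf_eq_sum) (use assms fsupp_diff[of v w] in auto)
  also have "\<dots> = (\<Sum>p\<in>?S. s (v p) (f p)) - (\<Sum>p\<in>?S. s (w p) (f p))"
    by (simp add: module.scale_left_diff_distrib[OF assms(1)] sum_subtractf)
  also have "\<dots> = Lf s f v - Lf s f w"
    using assms Lf_eq_sum[of s ?S v f] Lf_eq_sum[of s ?S w f] by simp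
  finally show ?thesis .
qed

lemma Lf_scale:
  assumes "module s" "finite (fsupp v)"
  shows "Lf s f (fscale c v) = s c (Lf s f v)"
proof -
  have "Lf s f (fscale c v) = (\<Sum>p\<in>fsupp v. s (fscale c v p) (f p))"
    by (rule Lf_eq_sum) (use assms fsupp_scale[of c v] in auto)
  also have "\<dots> = s c (Lf s f v)"
    by (simp add: Lf_def fscale_def module.scale_sum_right[OF assms(1)] module.scale_scale[OF assms(1)])
  finally show ?thesis .
qed

lemma Lf_delta: "module s \<Longrightarrow> Lf s f (delta p) = f p"
  by (simp add: Lf_def fsupp_delta) (simp add: delta_def module.scale_one)

lemma fvec_Nil: "fvec [] = 0" by (simp add: fvec_def fun_eq_iff)
lemma fvec_Cons: "fvec (x # xs) = delta x + fvec xs"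
  by (simp add: fvec_def delta_def fun_eq_iff)
lemma fvec_append: "fvec (xs @ ys) = fvec xs + fvec ys"
  by (induction xs) (simp_all add: fvec_Nil fvec_Cons add.assoc)
lemma fvec_single: "fvec [x] = delta x"
  by (simp add: fvec_Cons fvec_Nil)
lemma fvec_concat: "fvec (concat xss) = sum_list (map fvec xss)"
  by (induction xss) (simp_all add: fvec_Nil fvec_append)
lemma fsupp_fvec: "finite (fsupp (fvec xs :: _ \<Rightarrow> 'k::comm_ring_1))"
proof -
  have "fsupp (fvec xs :: _ \<Rightarrow> 'k) \<subseteq> set xs"
    by (auto simp: fsupp_def fvec_def) (metis count_notin of_nat_0)
  then show ?thesis by (rule finite_subset) simp
qed

lemma Lf_fvec: "module s \<Longrightarrow> Lf s f (fvec xs) = sum_list (map f xs)"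
proof (induction xs)
  case Nil then show ?case by (simp add: fvec_Nil Lf_def fsupp_def)
next
  case (Cons x xs)
  have "Lf s f (fvec (x # xs)) = Lf s f (delta x) + Lf s f (fvec xs)"
    unfolding fvec_Cons using Cons by (intro Lf_add) (simp_all add: fsupp_delta fsupp_fvec)
  then show ?case using Cons by (simp add: Lf_delta)
qed

lemma span_fin:
  assumes "v \<in> module.span fscale R" "\<forall>r\<in>R. finite (fsupp (r :: _ \<Rightarrow> 'k::comm_ring_1))"
  shows "finite (fsupp v)"
  using assms(1)
proof (induction v rule: module.span_induct_alt[OF module_fscale, consumes 1, case_names base step])
  case base
  then show ?case by (simp add: fsupp_def)
next
  case (step c x y)
  have fx: "finite (fsupp x)" using step assms(2) by auto
  have fxs: "finite (fsupp (fscale c x))" by (rule finite_subset[OF fsupp_scale fx])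
  show ?case
    by (rule finite_subset[OF fsupp_add]) (use fxs step in auto)
qed

lemma Lf_span0:
  assumes "v \<in> module.span fscale R" "\<forall>r\<in>R. finite (fsupp (r :: _ \<Rightarrow> 'k::comm_ring_1))"
    and m: "module s" and h: "\<forall>r\<in>R. Lf s f r \<in> module.span s T"
  shows "finite (fsupp v) \<and> Lf s f v \<in> module.span s T"
  using assms(1)
proof (induction v rule: module.span_induct_alt[OF module_fscale, consumes 1, case_names base step])
  case base
  then show ?case by (simp add: fsupp_def Lf_def module.span_zero[OF m])
next
  case (step c x y)
  have fx: "finite (fsupp x)" using step assms(2) by auto
  have fy: "finite (fsupp y)" using step by blast
  have fxs: "finite (fsupp (fscale c x))" by (rule finite_subset[OF fsupp_scale fx])
  have "Lf s f (fscale c x + y) = s c (Lf s f x) + Lf s f y"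
    using Lf_add[OF m fxs fy] Lf_scale[OF m fx] by simp
  moreover have "Lf s f x \<in> module.span s T" using step h by blast
  moreover have "finite (fsupp (fscale c x + y))"
    by (rule finite_subset[OF fsupp_add]) (use fxs fy in auto)
  moreover have "s c (Lf s f x) + Lf s f y \<in> module.span s T"
    using m step \<open>Lf s f x \<in> module.span s T\<close> by (intro module.span_add module.span_scale) auto
  ultimately show ?case by metis
qed

lemma Lf_span:
  assumes "v \<in> module.span fscale R" "\<forall>r\<in>R. finite (fsupp (r :: _ \<Rightarrow> 'k::comm_ring_1))"
    and m: "module s" and h: "\<forall>r\<in>R. Lf s f r \<in> module.span s T"
  shows "Lf s f v \<in> module.span s T"
  using Lf_span0[OF assms] by blast


lemma fin_delta: "finite (fsupp (delta p :: _ \<Rightarrow> 'k::comm_ring_1))"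
  by (simp add: fsupp_delta)

lemma fin_rel3: "finite (fsupp (delta a - delta b - delta c :: _ \<Rightarrow> 'k::comm_ring_1))"
proof -
  have "finite (fsupp (delta a - delta b :: _ \<Rightarrow> 'k))"
    by (rule finite_subset[OF fsupp_diff]) (simp add: fin_delta)
  then show ?thesis by (intro finite_subset[OF fsupp_diff]) (simp add: fin_delta)
qed

lemma fin_rel2: "finite (fsupp (delta a - fscale r (delta b) :: _ \<Rightarrow> 'k::comm_ring_1))"
proof -
  have "finite (fsupp (fscale r (delta b) :: _ \<Rightarrow> 'k))"
    by (rule finite_subset[OF fsupp_scale]) (simp add: fin_delta)
  then show ?thesis by (intro finite_subset[OF fsupp_diff]) (simp add: fin_delta)
qed

lemma tens2_rels_fin: "\<forall>r\<in>tens2_rels sM sN. finite (fsupp r)"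
  unfolding tens2_rels_def by (auto simp only: fin_rel2 fin_rel3)

lemma Lf_rel3: fixes s :: "'k::comm_ring_1 \<Rightarrow> 'v::ab_group_add \<Rightarrow> 'v" shows "module s \<Longrightarrow> Lf s f (delta a - delta b - delta c) = f a - f b - f c"
proof -
  assume m: "module s"
  have "finite (fsupp (delta a - delta b :: _ \<Rightarrow> 'k))"
    by (rule finite_subset[OF fsupp_diff]) (simp add: fin_delta)
  then show ?thesis using m by (simp add: Lf_diff fin_delta Lf_delta)
qed

lemma Lf_rel2: fixes s :: "'k::comm_ring_1 \<Rightarrow> 'v::ab_group_add \<Rightarrow> 'v" shows "module s \<Longrightarrow> Lf s f (delta a - fscale r (delta b)) = f a - s r (f b)"
proof -
  assume m: "module s"
  have "finite (fsupp (fscale r (delta b) :: _ \<Rightarrow> 'k))"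
    by (rule finite_subset[OF fsupp_scale]) (simp add: fin_delta)
  then show ?thesis using m by (simp add: Lf_diff fin_delta Lf_delta Lf_scale)
qed

lemma tens2_Lf:
  assumes te: "tens2_eq sM sN xs ys" and m: "module s"
    and h1: "\<And>a a' b. f (a + a', b) - f (a, b) - f (a', b) \<in> module.span s T"
    and h2: "\<And>a b b'. f (a, b + b') - f (a, b) - f (a, b') \<in> module.span s T"
    and h3: "\<And>r a b. f (sM r a, b) - s r (f (a, b)) \<in> module.span s T"
    and h4: "\<And>r a b. f (a, sN r b) - s r (f (a, b)) \<in> module.span s T"
  shows "sum_list (map f xs) - sum_list (map f ys) \<in> module.span s T"
proof -
  have "\<forall>r\<in>tens2_rels sM sN. Lf s f r \<in> module.span s T"
    unfolding tens2_rels_def by (auto simp only: Lf_rel2[OF m] Lf_rel3[OF m] h1 h2 h3 h4)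
  then have "Lf s f (fvec xs - fvec ys) \<in> module.span s T"
    using te tens2_rels_fin m unfolding tens2_eq_def by (intro Lf_span) auto
  then show ?thesis by (simp add: Lf_diff[OF m fsupp_fvec fsupp_fvec] Lf_fvec[OF m])
qed

lemma tens2_scalar:
  assumes te: "tens2_eq sM sN xs ys" and m: "module s"
    and h1: "\<And>a a' b. f (a + a', b) = f (a, b) + f (a', b)"
    and h2: "\<And>a b b'. f (a, b + b') = f (a, b) + f (a, b')"
    and h3: "\<And>r a b. f (sM r a, b) = s r (f (a, b))"
    and h4: "\<And>r a b. f (a, sN r b) = s r (f (a, b))"
  shows "sum_list (map f xs) = sum_list (map f ys)"
proof -
  have "sum_list (map f xs) - sum_list (map f ys) \<in> module.span s {}"
    by (rule tens2_Lf[OF te m]) (simp_all add: h1 h2 h3 h4 module.span_zero[OF m])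
  then show ?thesis using m by (simp add: module.span_empty)
qed

lemma tens2_concat:
  assumes te: "tens2_eq sM sN xs ys"
    and h1: "\<And>a a' b. fvec (G (a + a', b)) - fvec (G (a, b)) - fvec (G (a', b)) \<in> module.span fscale (tens2_rels sP sQ)"
    and h2: "\<And>a b b'. fvec (G (a, b + b')) - fvec (G (a, b)) - fvec (G (a, b')) \<in> module.span fscale (tens2_rels sP sQ)"
    and h3: "\<And>r a b. fvec (G (sM r a, b)) - fscale r (fvec (G (a, b))) \<in> module.span fscale (tens2_rels sP sQ)"
    and h4: "\<And>r a b. fvec (G (a, sN r b)) - fscale r (fvec (G (a, b))) \<in> module.span fscale (tens2_rels sP sQ)"
  shows "tens2_eq sP sQ (concat (map G xs)) (concat (map G ys))"
proof -
  have "sum_list (map (fvec \<circ> G) xs) - sum_list (map (fvec \<circ> G) ys) \<in> module.span fscale (tens2_rels sP sQ)"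
    by (rule tens2_Lf[OF te module_fscale]) (simp_all only: o_apply h1 h2 h3 h4)
  then show ?thesis unfolding tens2_eq_def fvec_concat by (simp only: map_map)
qed

lemma tens2_refl: "tens2_eq sM sN xs xs"
  unfolding tens2_eq_def by (simp add: module.span_zero[OF module_fscale])

lemma tens2_eqI: "fvec xs = (fvec ys :: _ \<Rightarrow> 'k::comm_ring_1) \<Longrightarrow> tens2_eq (sM :: 'k \<Rightarrow> _) sN xs ys"
  unfolding tens2_eq_def by (simp add: module.span_zero[OF module_fscale])
lemma tens2_sym: "tens2_eq sM sN xs ys \<Longrightarrow> tens2_eq sM sN ys xs"
proof -
  assume "tens2_eq sM sN xs ys"
  then have "- (fvec xs - fvec ys) \<in> module.span fscale (tens2_rels sM sN)"
    unfolding tens2_eq_def by (rule module.span_neg[OF module_fscale])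
  then show ?thesis unfolding tens2_eq_def by (simp only: minus_diff_eq)
qed

lemma tens2_trans: fixes sM :: "'k::comm_ring_1 \<Rightarrow> 'm::ab_group_add \<Rightarrow> 'm" shows "tens2_eq sM sN xs ys \<Longrightarrow> tens2_eq sM sN ys zs \<Longrightarrow> tens2_eq sM sN xs zs"
proof -
  assume a: "tens2_eq sM sN xs ys" "tens2_eq sM sN ys zs"
  have "(fvec xs - fvec ys) + (fvec ys - fvec zs) = (fvec xs - fvec zs :: _ \<Rightarrow> 'k)" by simp
  moreover have "(fvec xs - fvec ys) + (fvec ys - fvec zs) \<in> module.span fscale (tens2_rels sM sN)"
    using a unfolding tens2_eq_def by (rule module.span_add[OF module_fscale])
  ultimately show ?thesis unfolding tens2_eq_def by simp
qed


lemma fscale_add: "fscale r (v + w) = fscale r v + fscale r (w :: _ \<Rightarrow> 'k::comm_ring_1)"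
  by (simp add: fscale_def fun_eq_iff distrib_left)

lemma fscale_zero: "fscale r (0 :: _ \<Rightarrow> 'k::comm_ring_1) = 0"
  by (simp add: fscale_def fun_eq_iff)

lemma span_tens2_base: "x \<in> tens2_rels sP sQ \<Longrightarrow> x \<in> module.span fscale (tens2_rels sP sQ)"
  by (rule module.span_base[OF module_fscale])

lemma L1:
  fixes sP :: "'k::comm_ring_1 \<Rightarrow> 'p::ab_group_add \<Rightarrow> 'p" and sQ :: "'k \<Rightarrow> 'q::ab_group_add \<Rightarrow> 'q"
  shows "fvec (map (\<lambda>(h, a). (sP r (g h), a)) xs) - fscale r (fvec (map (\<lambda>(h, a). (g h, a)) xs))
     \<in> module.span fscale (tens2_rels sP sQ)"
proof (induction xs)
  case Nil
  then show ?case by (simp only: list.map fvec_Nil fscale_zero diff_self) (rule module.span_zero[OF module_fscale])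
next
  case (Cons x xs)
  obtain h a where x: "x = (h, a)" by force
  have r: "delta (sP r (g h), a) - fscale r (delta (g h, a)) \<in> module.span fscale (tens2_rels sP sQ)"
    by (rule span_tens2_base) (unfold tens2_rels_def, blast)
  have eq: "fvec (map (\<lambda>(h, a). (sP r (g h), a)) (x # xs)) - fscale r (fvec (map (\<lambda>(h, a). (g h, a)) (x # xs)))
    = (delta (sP r (g h), a) - fscale r (delta (g h, a))) +
      (fvec (map (\<lambda>(h, a). (sP r (g h), a)) xs) - fscale r (fvec (map (\<lambda>(h, a). (g h, a)) xs)))"
    by (simp add: x fvec_Cons fscale_add)
  show ?case unfolding eq by (rule module.span_add[OF module_fscale r Cons.IH])
qed

lemma L2:
  fixes sP :: "'k::comm_ring_1 \<Rightarrow> 'p::ab_group_add \<Rightarrow> 'p" and sQ :: "'k \<Rightarrow> 'q::ab_group_add \<Rightarrow> 'q"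
  shows "fvec (map (\<lambda>(h, a). (gu h + gv h, a)) xs) - fvec (map (\<lambda>(h, a). (gu h, a)) xs)
     - fvec (map (\<lambda>(h, a). (gv h, a)) xs)
     \<in> module.span fscale (tens2_rels sP sQ)"
proof (induction xs)
  case Nil
  then show ?case by (simp only: list.map fvec_Nil diff_self) (rule module.span_zero[OF module_fscale])
next
  case (Cons x xs)
  obtain h a where x: "x = (h, a)" by force
  have r: "delta (gu h + gv h, a) - delta (gu h, a) - delta (gv h, a) \<in> module.span fscale (tens2_rels sP sQ)"
    by (rule span_tens2_base) (unfold tens2_rels_def, blast)
  have eq: "fvec (map (\<lambda>(h, a). (gu h + gv h, a)) (x # xs)) - fvec (map (\<lambda>(h, a). (gu h, a)) (x # xs))
     - fvec (map (\<lambda>(h, a). (gv h, a)) (x # xs))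
    = (delta (gu h + gv h, a) - delta (gu h, a) - delta (gv h, a)) +
      (fvec (map (\<lambda>(h, a). (gu h + gv h, a)) xs) - fvec (map (\<lambda>(h, a). (gu h, a)) xs)
     - fvec (map (\<lambda>(h, a). (gv h, a)) xs))"
    by (simp add: x fvec_Cons algebra_simps)
  show ?case unfolding eq by (rule module.span_add[OF module_fscale r Cons.IH])
qed

lemma L3:
  fixes sH :: "'k::comm_ring_1 \<Rightarrow> 'h::ring_1 \<Rightarrow> 'h" and sA :: "'k \<Rightarrow> 'a::ab_group_add \<Rightarrow> 'a"
  assumes kH: "k_algebra sH" and te: "tens2_eq sH sA xs ys"
  shows "tens2_eq sH sA (map (\<lambda>(h, a). (n * h, a)) xs) (map (\<lambda>(h, a). (n * h, a)) ys)"
proof -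
  have kk: "sH r (x * y) = x * sH r y" for r x y using kH unfolding k_algebra_def by metis
  have "tens2_eq sH sA (concat (map (\<lambda>(h, a). [(n * h, a)]) xs)) (concat (map (\<lambda>(h, a). [(n * h, a)]) ys))"
  proof (rule tens2_concat[OF te])
    fix a a' b
    show "fvec (case (a + a', b) of (h, a) \<Rightarrow> [(n * h, a)]) - fvec (case (a, b) of (h, a) \<Rightarrow> [(n * h, a)]) -
        fvec (case (a', b) of (h, a) \<Rightarrow> [(n * h, a)]) \<in> module.span fscale (tens2_rels sH sA)"
      by (simp add: fvec_single distrib_left) (rule span_tens2_base, unfold tens2_rels_def, blast)
  next
    fix a b b'
    show "fvec (case (a, b + b') of (h, a) \<Rightarrow> [(n * h, a)]) - fvec (case (a, b) of (h, a) \<Rightarrow> [(n * h, a)]) -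
        fvec (case (a, b') of (h, a) \<Rightarrow> [(n * h, a)]) \<in> module.span fscale (tens2_rels sH sA)"
      by (simp add: fvec_single) (rule span_tens2_base, unfold tens2_rels_def, blast)
  next
    fix r a b
    show "fvec (case (sH r a, b) of (h, a) \<Rightarrow> [(n * h, a)]) - fscale r (fvec (case (a, b) of (h, a) \<Rightarrow> [(n * h, a)]))
        \<in> module.span fscale (tens2_rels sH sA)"
      by (simp add: fvec_single kk[symmetric]) (rule span_tens2_base, unfold tens2_rels_def, blast)
  next
    fix r a b
    show "fvec (case (a, sA r b) of (h, a) \<Rightarrow> [(n * h, a)]) - fscale r (fvec (case (a, b) of (h, a) \<Rightarrow> [(n * h, a)]))
        \<in> module.span fscale (tens2_rels sH sA)"
      by (simp add: fvec_single) (rule span_tens2_base, unfold tens2_rels_def, blast)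
  qed
  moreover have "concat (map (\<lambda>(h, a). [(n * h, a)]) zs) = map (\<lambda>(h, a). (n * h, a)) zs" for zs :: "('h \<times> 'a) list"
    by (induction zs) auto
  ultimately show ?thesis by simp
qed


theorem proposition3p1p1:
  fixes sH :: "'k::comm_ring_1 \<Rightarrow> 'h::ring_1 \<Rightarrow> 'h"
    and \<Delta> :: "'h \<Rightarrow> ('h \<times> 'h) list" and \<epsilon> :: "'h \<Rightarrow> 'k"
    and sA :: "'k \<Rightarrow> 'a::ring_1 \<Rightarrow> 'a" and \<rho> :: "'a \<Rightarrow> ('h \<times> 'a) list"
    and \<gamma> :: "'h \<Rightarrow> 'h \<Rightarrow> 'a"
  assumes "bialgebra sH \<Delta> \<epsilon>"
    and "projective_module sH"
    and "left_comodule_algebra sH \<Delta> \<epsilon> sA \<rho>"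
    and "A_integral sH \<Delta> sA \<rho> \<gamma>"
  shows "left_colinear sH \<Delta> sA \<rho> (\<lambda>h. \<gamma> h 1) \<and>
         (total_A_integral sH \<Delta> \<epsilon> sA \<rho> \<gamma> \<longrightarrow> doi_total_integral sH \<Delta> sA \<rho> (\<lambda>h. \<gamma> h 1))"
proof -
  have kH: "k_algebra sH" using assms(1) unfolding bialgebra_def by blast
  have kA: "k_algebra sA" using assms(3) unfolding left_comodule_algebra_def by blast
  have mA: "module sA" using kA unfolding k_algebra_def by blast
  have kk1: "sH r (x * y) = sH r x * y" for r x y using kH unfolding k_algebra_def by metis
  have kk2: "sH r (x * y) = x * sH r y" for r x y using kH unfolding k_algebra_def by metis
  have rho_add: "tens2_eq sH sA (\<rho> (x + y)) (\<rho> x @ \<rho> y)" for x y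
    using assms(3) unfolding left_comodule_algebra_def by blast
  have rho_scale: "tens2_eq sH sA (\<rho> (sA r x)) (map (\<lambda>(h, a). (sH r h, a)) (\<rho> x))" for r x
    using assms(3) unfolding left_comodule_algebra_def by blast
  have D1: "tens2_eq sH sH (\<Delta> 1) [(1, 1)]" using assms(1) unfolding bialgebra_def by blast
  have g1: "module_hom sH sA (\<gamma> c)" for c using assms(4) unfolding A_integral_def by blast
  have g2: "module_hom sH sA (\<lambda>c. \<gamma> c d)" for d using assms(4) unfolding A_integral_def by blast
  have ii: "tens2_eq sH sA (map (\<lambda>(c1, c2). (c1, \<gamma> c2 d)) (\<Delta> c))
        (concat (map (\<lambda>(d1, d2). map (\<lambda>(h, a). (d2 * h, a)) (\<rho> (\<gamma> c d1))) (\<Delta> d)))" for c d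
    using assms(4) unfolding A_integral_def by blast
  have g1add: "\<gamma> c (x + y) = \<gamma> c x + \<gamma> c y" for c x y using g1 module_hom.add by metis
  have g1scale: "\<gamma> c (sH r x) = sA r (\<gamma> c x)" for c r x using g1 module_hom.scale by metis
  have g2add: "\<gamma> (x + y) d = \<gamma> x d + \<gamma> y d" for d x y using module_hom.add[OF g2] by metis
  have g2scale: "\<gamma> (sH r x) d = sA r (\<gamma> x d)" for d r x using module_hom.scale[OF g2] by metis
  have colin: "tens2_eq sH sA (\<rho> (\<gamma> h 1)) (map (\<lambda>(h1, h2). (h1, \<gamma> h2 1)) (\<Delta> h))" for h
  proof -
    define G where "G = (\<lambda>(d1, d2). map (\<lambda>(h, a). (d2 * h, a)) (\<rho> (\<gamma> h d1)))"
    have "tens2_eq sH sA (concat (map G (\<Delta> 1))) (concat (map G [(1, 1)]))"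
    proof (rule tens2_concat[OF D1])
      fix a a' b
      have "tens2_eq sH sA (map (\<lambda>(h, a). (b * h, a)) (\<rho> (\<gamma> h a + \<gamma> h a')))
         (map (\<lambda>(h, a). (b * h, a)) (\<rho> (\<gamma> h a) @ \<rho> (\<gamma> h a')))"
        by (rule L3[OF kH rho_add])
      then show "fvec (G (a + a', b)) - fvec (G (a, b)) - fvec (G (a', b)) \<in> module.span fscale (tens2_rels sH sA)"
        unfolding tens2_eq_def G_def by (simp only: prod.case g1add map_append fvec_append diff_diff_eq)
    next
      fix a b b'
      show "fvec (G (a, b + b')) - fvec (G (a, b)) - fvec (G (a, b')) \<in> module.span fscale (tens2_rels sH sA)"
        using L2[where gu = "\<lambda>y. b * y" and gv = "\<lambda>y. b' * y" and xs = "\<rho> (\<gamma> h a)" and sP = sH and sQ = sA]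
        unfolding G_def by (simp only: prod.case distrib_right)
    next
      fix r a b
      let ?A = "fvec (map (\<lambda>(h, a). (b * h, a)) (\<rho> (sA r (\<gamma> h a))))"
      let ?B = "fvec (map (\<lambda>(y, c). (sH r (b * y), c)) (\<rho> (\<gamma> h a)))"
      let ?C = "fvec (map (\<lambda>(y, c). (b * y, c)) (\<rho> (\<gamma> h a)))"
      have mm: "map (\<lambda>(h, a). (b * h, a)) (map (\<lambda>(h, a). (sH r h, a)) zs) = map (\<lambda>(y, c). (sH r (b * y), c)) zs" for zs
        by (induction zs) (auto simp: kk2)
      have t1: "?A - ?B \<in> module.span fscale (tens2_rels sH sA)"
        using L3[OF kH rho_scale, of b r "\<gamma> h a"] unfolding tens2_eq_def mm .
      have t2: "?B - fscale r ?C \<in> module.span fscale (tens2_rels sH sA)"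
        by (rule L1)
      have "?A - fscale r ?C = (?A - ?B) + (?B - fscale r ?C)" by simp
      also have "\<dots> \<in> module.span fscale (tens2_rels sH sA)"
        by (rule module.span_add[OF module_fscale t1 t2])
      finally show "fvec (G (sH r a, b)) - fscale r (fvec (G (a, b))) \<in> module.span fscale (tens2_rels sH sA)"
        unfolding G_def by (simp only: prod.case g1scale)
    next
      fix r a b
      have mm: "map (\<lambda>(y, c). (sH r b * y, c)) zs = map (\<lambda>(y, c). (sH r (b * y), c)) zs" for zs :: "('h \<times> 'a) list"
        by (induction zs) (auto simp: kk1)
      show "fvec (G (a, sH r b)) - fscale r (fvec (G (a, b))) \<in> module.span fscale (tens2_rels sH sA)"
        unfolding G_def prod.case mm by (rule L1)
    qed
    moreover have "concat (map G [(1, 1)]) = \<rho> (\<gamma> h 1)"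
    proof -
      have "map (\<lambda>(y, c). (1 * y, c)) zs = zs" for zs :: "('h \<times> 'a) list"
        by (induction zs) auto
      then show ?thesis by (simp add: G_def)
    qed
    moreover have "tens2_eq sH sA (map (\<lambda>(h1, h2). (h1, \<gamma> h2 1)) (\<Delta> h)) (concat (map G (\<Delta> 1)))"
      using ii[of 1 h] unfolding G_def .
    ultimately show ?thesis using tens2_sym tens2_trans by metis
  qed
  have lc: "left_colinear sH \<Delta> sA \<rho> (\<lambda>h. \<gamma> h 1)"
    unfolding left_colinear_def using g2 colin by blast
  moreover have "doi_total_integral sH \<Delta> sA \<rho> (\<lambda>h. \<gamma> h 1)" if tot: "total_A_integral sH \<Delta> \<epsilon> sA \<rho> \<gamma>"
  proof -
    have "(\<Sum>(c1, c2)\<leftarrow>\<Delta> 1. \<gamma> c1 c2) = sA (\<epsilon> 1) 1"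
      using tot unfolding total_A_integral_def by blast
    moreover have "\<epsilon> 1 = 1" using assms(1) unfolding bialgebra_def by blast
    moreover have "(\<Sum>(c1, c2)\<leftarrow>\<Delta> 1. \<gamma> c1 c2) = (\<Sum>(c1, c2)\<leftarrow>[(1, 1)]. \<gamma> c1 c2)"
      by (rule tens2_scalar[OF D1 mA]) (simp_all add: g1add g2add g1scale g2scale)
    ultimately have "\<gamma> 1 1 = 1" using module.scale_one[OF mA] by simp
    then show ?thesis unfolding doi_total_integral_def using lc by simp
  qed
  ultimately show ?thesis by blast
qed

end
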